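(* Assume $|M|\ge 2$. Let $(T_{opt},B_{opt})$ be an optimal solution of an instance of MEMTCS and let $T_I$ be a minimum isotropic scattering tree for $M$. Then $(\Xi(T_I)+1)\,e_s+(|N(T_{opt})|-1)\,e_r\ \le\ 2\,\Pi(T_{opt},B_{opt})$.
   Context: Let $G=(V,E)$ be a finite, simple, undirected, connected graph with $|V|\ge 2$. Fix a positive integer $K$ and, for every $u\in V$, a nonempty set $\Gamma(u)\subseteq\{1,\dots,K\}$. For a tree $T$, $N(T)$ is its vertex set, $nb_T(u)$ the neighbours of $u$ in $T$, and $d^+(T)$ the set of vertices of degree greater than one in $T$; if $T$ is rooted, $nl(T)$ is its set of non-leaf vertices and $child(u,T)$ the set of children of $u$. A hitting set of a collection $\mathcal C$ of subsets of a finite set $\mathcal F$ is a subset of $\mathcal F$ meeting every member of $\mathcal C$. For a tree $T$ in $G$ and $u\in d^+(T)$, let $\Upsilon(u,T)$ be a minimum-cardinality hitting set of $\{\Gamma(v): v\in nb_T(u)\}$, and let $\Xi(T)=\sum_{u\in d^+(T)}|\Upsilon(u,T)|$. A minimum isotropic scattering tree $T_I$ for $M$ is a tree in $G$ with $M\subseteq N(T_I)$ minimizing $\Xi$ among all such trees. An instance of MEMTCS consists of $G,K,\Gamma$, a terminal set $M\subseteq V$, a source $s\in M$, and reals $e_s\ge e_r\ge 0$. A multicast tree is a subtree $T$ of $G$ with $M\subseteq N(T)$, rooted at $s$. A feasible schedule for $T$ is a function $B: nl(T)\to 2^{\{1,\dots,K\}}$ such that each $B(u)$ is a hitting set of $\{\Gamma(v):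 v\in child(u,T)\}$. Its cost is $\Pi(T,B)=\sum_{u\in nl(T)}|B(u)|\,e_s+(|N(T)|-1)\,e_r$. An optimal solution $(T_{opt},B_{opt})$ minimizes $\Pi$ over all pairs of a multicast tree and a feasible schedule for it. *)

theory Defs
  imports Complex_Main
begin

text \<open>Graphs: a vertex set V and a set E of undirected edges, each edge a 2-element set.
  A subtree T of G is given by its vertex set N and its edge set F.\<close>

definition reach :: "'a set set \<Rightarrow> 'a \<Rightarrow> 'a \<Rightarrow> bool" where
  "reach F u v \<longleftrightarrow> (u, v) \<in> {(x, y). {x, y} \<in> F}\<^sup>*"

definition simple_graph :: "'a set \<Rightarrow> 'a set set \<Rightarrow> bool" where
  "simple_graph V E \<longleftrightarrow> finite V \<and> (\<forall>e\<in>E. e \<subseteq> V \<and> card e = 2)"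

definition connected_graph :: "'a set \<Rightarrow> 'a set set \<Rightarrow> bool" where
  "connected_graph N F \<longleftrightarrow> N \<noteq> {} \<and> (\<forall>e\<in>F. e \<subseteq> N) \<and> (\<forall>u\<in>N. \<forall>v\<in>N. reach F u v)"

text \<open>A tree is a connected graph without cycles; acyclicity is expressed as:
  every edge is a bridge (its endpoints are disconnected after removing it).\<close>
definition is_tree :: "'a set \<Rightarrow> 'a set set \<Rightarrow> bool" where
  "is_tree N F \<longleftrightarrow> connected_graph N F \<and>
     (\<forall>u v. {u, v} \<in> F \<longrightarrow> \<not> reach (F - {{u, v}}) u v)"

definition tree_in :: "'a set \<Rightarrow> 'a set set \<Rightarrow> 'a set \<Rightarrow> 'a set set \<Rightarrow> bool" where
  "tree_in V E N F \<longleftrightarrow> N \<subseteq> V \<and> F \<subseteq> E \<and> is_tree N F"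

definition nb :: "'a set set \<Rightarrow> 'a \<Rightarrow> 'a set" where
  "nb F u = {v. {u, v} \<in> F}"

definition dplus :: "'a set \<Rightarrow> 'a set set \<Rightarrow> 'a set" where
  "dplus N F = {u \<in> N. card (nb F u) > 1}"

text \<open>Rooted at s: v is a child of u iff uv is a tree edge and, after deleting it,
  u is still on the side of the root s.\<close>
definition child :: "'a set set \<Rightarrow> 'a \<Rightarrow> 'a \<Rightarrow> 'a set" where
  "child F s u = {v. {u, v} \<in> F \<and> reach (F - {{u, v}}) s u}"

definition nl :: "'a set \<Rightarrow> 'a set set \<Rightarrow> 'a \<Rightarrow> 'a set" where
  "nl N F s = {u \<in> N. child F s u \<noteq> {}}"

definition hitting_set :: "nat \<Rightarrow> nat set set \<Rightarrow> nat set \<Rightarrow> bool" where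
  "hitting_set K C H \<longleftrightarrow> H \<subseteq> {1..K} \<and> (\<forall>X\<in>C. H \<inter> X \<noteq> {})"

definition min_hit_card :: "nat \<Rightarrow> nat set set \<Rightarrow> nat" where
  "min_hit_card K C = Min {card H | H. hitting_set K C H}"

definition Xi :: "nat \<Rightarrow> ('a \<Rightarrow> nat set) \<Rightarrow> 'a set \<Rightarrow> 'a set set \<Rightarrow> nat" where
  "Xi K \<Gamma> N F = (\<Sum>u\<in>dplus N F. min_hit_card K (\<Gamma> ` nb F u))"

definition min_iso_scattering_tree ::
  "'a set \<Rightarrow> 'a set set \<Rightarrow> nat \<Rightarrow> ('a \<Rightarrow> nat set) \<Rightarrow> 'a set \<Rightarrow> 'a set \<Rightarrow> 'a set set \<Rightarrow> bool" where
  "min_iso_scattering_tree V E K \<Gamma> M N F \<longleftrightarrow>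
     tree_in V E N F \<and> M \<subseteq> N \<and>
     (\<forall>N' F'. tree_in V E N' F' \<and> M \<subseteq> N' \<longrightarrow> Xi K \<Gamma> N F \<le> Xi K \<Gamma> N' F')"

definition multicast_tree :: "'a set \<Rightarrow> 'a set set \<Rightarrow> 'a set \<Rightarrow> 'a set \<Rightarrow> 'a set set \<Rightarrow> bool" where
  "multicast_tree V E M N F \<longleftrightarrow> tree_in V E N F \<and> M \<subseteq> N"

definition feasible_schedule ::
  "nat \<Rightarrow> ('a \<Rightarrow> nat set) \<Rightarrow> 'a \<Rightarrow> 'a set \<Rightarrow> 'a set set \<Rightarrow> ('a \<Rightarrow> nat set) \<Rightarrow> bool" where
  "feasible_schedule K \<Gamma> s N F B \<longleftrightarrow>
     (\<forall>u\<in>nl N F s. hitting_set K (\<Gamma> ` child F s u) (B u))"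

definition cost :: "real \<Rightarrow> real \<Rightarrow> 'a \<Rightarrow> 'a set \<Rightarrow> 'a set set \<Rightarrow> ('a \<Rightarrow> nat set) \<Rightarrow> real" where
  "cost e_s e_r s N F B = (\<Sum>u\<in>nl N F s. real (card (B u)) * e_s) + (real (card N) - 1) * e_r"

definition optimal_solution ::
  "'a set \<Rightarrow> 'a set set \<Rightarrow> nat \<Rightarrow> ('a \<Rightarrow> nat set) \<Rightarrow> 'a set \<Rightarrow> 'a \<Rightarrow> real \<Rightarrow> real
     \<Rightarrow> 'a set \<Rightarrow> 'a set set \<Rightarrow> ('a \<Rightarrow> nat set) \<Rightarrow> bool" where
  "optimal_solution V E K \<Gamma> M s e_s e_r N F B \<longleftrightarrow>
     multicast_tree V E M N F \<and> feasible_schedule K \<Gamma> s N F B \<and>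
     (\<forall>N' F' B'. multicast_tree V E M N' F' \<and> feasible_schedule K \<Gamma> s N' F' B' \<longrightarrow>
        cost e_s e_r s N F B \<le> cost e_s e_r s N' F' B')"

end

theory Submission
  imports Defs
begin


lemma reach_refl[simp]: "reach F a a" by (simp add: reach_def)

lemma reach_step: "reach F a b \<Longrightarrow> {b,c} \<in> F \<Longrightarrow> reach F a c"
  unfolding reach_def by (rule rtrancl_into_rtrancl) auto

lemma reach_mono: "reach F a b \<Longrightarrow> F \<subseteq> G \<Longrightarrow> reach G a b"
  unfolding reach_def by (erule rtrancl_mono[THEN subsetD, rotated]) auto

lemma reach_split:
  assumes "reach F a b"
  shows "reach (F - {{x,y}}) a b \<or> (reach (F - {{x,y}}) a x \<and> reach (F - {{x,y}}) y b)
     \<or> (reach (F - {{x,y}}) a y \<and> reach (F - {{x,y}}) x b)"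
  using assms unfolding reach_def[of F]
proof (induction rule: rtrancl_induct)
  case base then show ?case by simp
next
  case (step c b)
  then have e: "{c,b} \<in> F" by simp
  show ?case
  proof (cases "{c,b} = {x,y}")
    case True
    then have "(c = x \<and> b = y) \<or> (c = y \<and> b = x)" by (auto simp: doubleton_eq_iff)
    then show ?thesis using step.IH by auto
  next
    case False
    then have "{c,b} \<in> F - {{x,y}}" using e by simp
    then show ?thesis using step.IH reach_step by metis
  qed
qed



lemma parent_unique:
  assumes tree: "\<forall>u v. {u,v}\<in>F \<longrightarrow> \<not> reach (F-{{u,v}}) u v"
    and r: "reach F s u" and e1: "{u,v1}\<in>F" and e2: "{u,v2}\<in>F"
    and n1: "\<not>reach(F-{{u,v1}}) s u" and n2: "\<not>reach(F-{{u,v2}}) s u"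
  shows "v1=v2"
proof (rule ccontr)
  assume ne: "v1 \<noteq> v2"
  have R1: "reach (F-{{u,v1}}) s v1" using reach_split[OF r, of u v1] n1 by auto
  have ne': "{u,v1} \<noteq> {u,v2}" using ne by (auto simp: doubleton_eq_iff)
  have e1': "{v1,u} \<in> F - {{u,v2}}" using e1 ne' by (auto simp: insert_commute)
  have sub1: "F - {{u,v1}} - {{u,v2}} \<subseteq> F - {{u,v2}}" by auto
  have sub2: "F - {{u,v1}} - {{u,v2}} \<subseteq> F - {{u,v1}}" by auto
  let ?G = "F - {{u, v1}} - {{u, v2}}"
  have c1: "\<not> reach ?G s v1"
  proof
    assume "reach ?G s v1"
    then have "reach (F - {{u,v2}}) s v1" using reach_mono[OF _ sub1] by blast
    then show False using reach_step[OF _ e1'] n2 by blast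
  qed
  have c2: "\<not> reach ?G s u"
    using reach_mono[OF _ sub1] n2 by blast
  have c3: "\<not> reach ?G u v1"
  proof
    assume "reach ?G u v1"
    then have "reach (F - {{u,v1}}) u v1" using reach_mono[OF _ sub2] by blast
    then show False using tree e1 by blast
  qed
  show False using reach_split[OF R1, of u v2] c1 c2 c3 by blast
qed



theorem mainTheorem13:
  fixes V :: "'a set" and E :: "'a set set" and K :: nat and \<Gamma> :: "'a \<Rightarrow> nat set"
    and M :: "'a set" and s :: 'a and e_s e_r :: real
    and Nopt :: "'a set" and Fopt :: "'a set set" and Bopt :: "'a \<Rightarrow> nat set"
    and NI :: "'a set" and FI :: "'a set set"
  assumes "simple_graph V E" and "connected_graph V E" and "card V \<ge> 2"
    and "K > 0"
    and "\<forall>u\<in>V. \<Gamma> u \<noteq> {} \<and> \<Gamma> u \<subseteq> {1..K}"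
    and "M \<subseteq> V" and "s \<in> M" and "e_s \<ge> e_r" and "e_r \<ge> 0"
    and "card M \<ge> 2"
    and "optimal_solution V E K \<Gamma> M s e_s e_r Nopt Fopt Bopt"
    and "min_iso_scattering_tree V E K \<Gamma> M NI FI"
  shows "(real (Xi K \<Gamma> NI FI) + 1) * e_s + (real (card Nopt) - 1) * e_r
           \<le> 2 * cost e_s e_r s Nopt Fopt Bopt"
proof -
  note sg = assms(1) and Gam = assms(5)
  let ?F = Fopt and ?B = Bopt and ?N = Nopt
  have mc: "multicast_tree V E M Nopt Fopt" and fs: "feasible_schedule K \<Gamma> s Nopt Fopt Bopt"
    using assms(11) unfolding optimal_solution_def by auto
  have NV: "Nopt \<subseteq> V" and FE: "Fopt \<subseteq> E" and tr: "is_tree Nopt Fopt" and MN: "M \<subseteq> Nopt"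
    using mc unfolding multicast_tree_def tree_in_def by auto
  have finV: "finite V" using sg unfolding simple_graph_def by auto
  have finN: "finite Nopt" using NV finV finite_subset by blast
  have conn: "\<forall>u\<in>Nopt. \<forall>v\<in>Nopt. reach Fopt u v" and bridge: "\<forall>u v. {u,v}\<in>Fopt \<longrightarrow> \<not> reach (Fopt-{{u,v}}) u v"
    using tr unfolding is_tree_def connected_graph_def by auto
  have sN: "s \<in> Nopt" using MN assms(7) by auto
  have XiI: "Xi K \<Gamma> NI FI \<le> Xi K \<Gamma> Nopt Fopt"
    using assms(12) mc unfolding min_iso_scattering_tree_def multicast_tree_def by auto
  have edgeV: "\<And>u v. {u,v} \<in> Fopt \<Longrightarrow> v \<in> V"
    using FE sg unfolding simple_graph_def by blast
  have nbfin: "\<And>u. finite (nb Fopt u)"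
  proof -
    fix u show "finite (nb Fopt u)"
      using finite_subset[OF _ finV, of "nb Fopt u"] edgeV unfolding nb_def by blast
  qed
  have finHit: "\<And>C. finite {card H | H. hitting_set K C H}"
  proof -
    fix C
    have "{card H | H. hitting_set K C H} \<subseteq> card ` Pow {1..K}"
      unfolding hitting_set_def by auto
    then show "finite {card H | H. hitting_set K C H}" using finite_subset by blast
  qed
  have key: "u \<in> nl Nopt Fopt s \<and> min_hit_card K (\<Gamma> ` nb Fopt u) + (if u = s then 1 else 0) \<le> 2 * card (Bopt u)"
    if uD: "u \<in> dplus Nopt Fopt" for u
  proof -
    have uN: "u \<in> Nopt" and cnb: "card (nb Fopt u) > 1" using uD unfolding dplus_def by auto
    have rsu: "reach Fopt s u" using conn sN uN by blast
    define P where "P = nb Fopt u - child Fopt s u"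
    have Pchar: "v \<in> P \<longleftrightarrow> {u,v} \<in> Fopt \<and> \<not> reach (Fopt - {{u,v}}) s u" for v
      unfolding P_def nb_def child_def by auto
    have Puniq: "\<forall>a\<in>P. \<forall>b\<in>P. a = b"
      using parent_unique[OF bridge rsu] Pchar by blast
    have Ps: "u = s \<Longrightarrow> P = {}" using Pchar by auto
    have chne: "child Fopt s u \<noteq> {}"
    proof
      assume "child Fopt s u = {}"
      then have "nb Fopt u = P" unfolding P_def by auto
      then have "card (nb Fopt u) \<le> Suc 0" using card_le_Suc0_iff_eq[OF nbfin] Puniq by auto
      then show False using cnb by auto
    qed
    then have uL: "u \<in> nl Nopt Fopt s" unfolding nl_def using uN by auto
    then have hs: "hitting_set K (\<Gamma> ` child Fopt s u) (Bopt u)"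
      using fs unfolding feasible_schedule_def by auto
    then have Bsub: "Bopt u \<subseteq> {1..K}" unfolding hitting_set_def by auto
    then have finB: "finite (Bopt u)" using finite_subset by blast
    obtain c where "c \<in> child Fopt s u" using chne by auto
    then have "Bopt u \<noteq> {}" using hs unfolding hitting_set_def by auto
    then have cB1: "card (Bopt u) \<ge> 1" using finB by (simp add: Suc_leI card_gt_0_iff)
    have chnb: "child Fopt s u \<subseteq> nb Fopt u" unfolding child_def nb_def by auto
    obtain H where hH: "hitting_set K (\<Gamma> ` nb Fopt u) H"
      and cH: "card H \<le> card (Bopt u) + (if u = s then 0 else 1)"
    proof (cases "P = {}")
      case True
      then have "nb Fopt u = child Fopt s u" using chnb unfolding P_def by auto
      then show ?thesis using that[of "Bopt u"] hs by auto
    next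
      case False
      then obtain p where pP: "P = {p}" using Puniq by blast
      then have "u \<noteq> s" using Ps by auto
      have "p \<in> V" using pP Pchar edgeV by blast
      then have gp: "\<Gamma> p \<noteq> {}" "\<Gamma> p \<subseteq> {1..K}" using Gam by auto
      define k where "k = (SOME k. k \<in> \<Gamma> p)"
      have k: "k \<in> \<Gamma> p" unfolding k_def using gp some_in_eq by blast
      have nbe: "nb Fopt u = insert p (child Fopt s u)" using chnb pP unfolding P_def by auto
      have "hitting_set K (\<Gamma> ` nb Fopt u) (insert k (Bopt u))"
        using hs k gp unfolding hitting_set_def nbe by auto
      moreover have "card (insert k (Bopt u)) \<le> card (Bopt u) + 1"
        by (simp add: card_insert_le_m1 card_insert_if finB)
      ultimately show ?thesis using that[of "insert k (Bopt u)"] \<open>u \<noteq> s\<close> by auto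
    qed
    have "min_hit_card K (\<Gamma> ` nb Fopt u) \<le> card H"
      unfolding min_hit_card_def using Min_le[OF finHit] hH by blast
    then show ?thesis using uL cH cB1 by (cases "u = s") auto
  qed
  have sL: "s \<in> nl Nopt Fopt s"
  proof -
    have "\<not> M \<subseteq> {s}"
    proof
      assume "M \<subseteq> {s}"
      then have "card M \<le> card {s}" by (intro card_mono) auto
      then show False using assms(10) by auto
    qed
    then obtain m where mM: "m \<in> M" and ms: "m \<noteq> s" by auto
    have "reach Fopt s m" using conn sN MN mM by blast
    then have "(s, m) \<in> {(x, y). {x, y} \<in> Fopt}\<^sup>*" unfolding reach_def .
    then obtain w where "{s,w} \<in> Fopt"
      by (rule converse_rtranclE) (use ms in auto)
    then have "w \<in> child Fopt s s" unfolding child_def by simp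
    then show ?thesis unfolding nl_def using sN by auto
  qed
  let ?D = "dplus Nopt Fopt" and ?L = "nl Nopt Fopt s"
  have DL: "?D \<subseteq> ?L" using key by blast
  have finL: "finite ?L" using finN finite_subset unfolding nl_def by (metis (no_types, lifting) mem_Collect_eq subsetI)
  have finD: "finite ?D" using DL finL finite_subset by blast
  have "(\<Sum>u\<in>?D. min_hit_card K (\<Gamma> ` nb Fopt u) + (if u = s then 1 else 0)) \<le> (\<Sum>u\<in>?D. 2 * card (Bopt u))"
    using key by (intro sum_mono) auto
  then have A: "Xi K \<Gamma> Nopt Fopt + (if s \<in> ?D then 1 else 0) \<le> 2 * (\<Sum>u\<in>?D. card (Bopt u))"
    unfolding Xi_def sum.distrib sum_distrib_left[symmetric] using sum.delta[OF finD, of s "\<lambda>_. 1::nat"] by simp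
  have Bsplit: "(\<Sum>u\<in>?L. card (Bopt u)) = (\<Sum>u\<in>?L - ?D. card (Bopt u)) + (\<Sum>u\<in>?D. card (Bopt u))"
    using sum.subset_diff[OF DL finL] .
  have sB: "card (Bopt s) \<ge> 1"
  proof -
    obtain c where "c \<in> child Fopt s s" using sL unfolding nl_def by auto
    moreover have hs: "hitting_set K (\<Gamma> ` child Fopt s s) (Bopt s)"
      using fs sL unfolding feasible_schedule_def by auto
    ultimately have "Bopt s \<noteq> {}" unfolding hitting_set_def by auto
    moreover have "finite (Bopt s)" using hs finite_subset unfolding hitting_set_def by blast
    ultimately show ?thesis by (simp add: Suc_leI card_gt_0_iff)
  qed
  have "s \<notin> ?D \<Longrightarrow> card (Bopt s) \<le> (\<Sum>u\<in>?L - ?D. card (Bopt u))"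
    using sL finL by (intro member_le_sum) auto
  then have Xo: "Xi K \<Gamma> Nopt Fopt + 1 \<le> 2 * (\<Sum>u\<in>?L. card (Bopt u))"
    using A Bsplit sB by (cases "s \<in> ?D") auto
  define S where "S = (\<Sum>u\<in>?L. card (Bopt u))"
  have XS: "real (Xi K \<Gamma> NI FI) + 1 \<le> 2 * real S" using XiI Xo unfolding S_def by linarith
  have es: "e_s \<ge> 0" using assms(8,9) by linarith
  have cost: "cost e_s e_r s Nopt Fopt Bopt = real S * e_s + (real (card Nopt) - 1) * e_r"
    unfolding cost_def S_def by (simp add: sum_distrib_right)
  have cN: "real (card Nopt) \<ge> 1" proof -
    have "card Nopt > 0" using sN finN card_gt_0_iff by blast
    then show ?thesis by simp
  qed
  have X0: "(real (card Nopt) - 1) * e_r \<ge> 0" using cN assms(9) by simp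
  have "(real (Xi K \<Gamma> NI FI) + 1) * e_s \<le> (2 * real S) * e_s" using XS es by (rule mult_right_mono)
  then show ?thesis unfolding cost using X0 by (simp add: algebra_simps)
qed

end
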